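(* Let $h\ge1$ be an integer, and assume there is a positive integer $v$ with $2^hk\mid p^v+1$. Let $v'$ be the smallest positive integer with $k\mid p^{v'}+1$; then $m=2v'w'$ for some positive integer $w'$. The following hold. (a) If $p\equiv1\pmod4$, then $(1+X+\cdots+X^{k-1})^{2^h}$ divides $S(X)$ in $\mathbb{F}_2[X]$ if and only if $w'$ is even. (b) If $p\equiv3\pmod4$, then $(1+X+\cdots+X^{k-1})^{2^h}$ divides $S(X)$ in $\mathbb{F}_2[X]$ if and only if $w'$ is even or $v'w'$ is odd.
   Context: Let $p$ be an odd prime, $m\ge1$, $q=p^m$, $\alpha$ a primitive element of $\mathbb{F}_q$, and $T=q-1$. The binary SLCE sequence $(s_n)_{n\ge0}$ is defined as follows: $s_n=1$ if $\alpha^n+1$ is a nonzero non-square of $\mathbb{F}_q$ (i.e. $\alpha^n+1\in\alpha\langle\alpha^2\rangle$), and $s_n=0$ otherwise. Put $S(X)=\sum_{n=0}^{T-1}s_nX^n\in\mathbb{F}_2[X]$. Let $k>1$ be an odd divisor of $T$. *)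

theory Defs
  imports "HOL-Computational_Algebra.Polynomial" "HOL-Library.Z2"
    "HOL-Computational_Algebra.Primes"
begin

definition primitive_element :: "'a::{field,finite} \<Rightarrow> bool" where
  "primitive_element \<alpha> \<longleftrightarrow> (\<forall>x. x \<noteq> 0 \<longrightarrow> (\<exists>n::nat. \<alpha> ^ n = x))"

definition nonzero_nonsquare :: "'a::field \<Rightarrow> bool" where
  "nonzero_nonsquare x \<longleftrightarrow> x \<noteq> 0 \<and> \<not> (\<exists>y. y ^ 2 = x)"

definition slce :: "'a::{field,finite} \<Rightarrow> nat \<Rightarrow> bit" where
  "slce \<alpha> n = (if nonzero_nonsquare (\<alpha> ^ n + 1) then 1 else 0)"

definition slce_poly :: "'a::{field,finite} \<Rightarrow> bit poly" where
  "slce_poly \<alpha> = (\<Sum>n < card (UNIV :: 'a set) - 1. monom (slce \<alpha> n) n)"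

definition geom_poly :: "nat \<Rightarrow> bit poly" where
  "geom_poly k = (\<Sum>i < k. monom 1 i)"

end

theory Submission
  imports Defs "HOL-Number_Theory.Cong"
begin


lemma inv_parity:
  assumes "finite A" "\<And>x. x \<in> A \<Longrightarrow> f x \<in> A" "\<And>x. x \<in> A \<Longrightarrow> f (f x) = x"
  shows "even (card A) \<longleftrightarrow> even (card {x\<in>A. f x = x})"
  using assms
proof (induction "card A" arbitrary: A rule: less_induct)
  case less
  show ?case
  proof (cases "\<exists>x\<in>A. f x \<noteq> x")
    case False
    then have "{x\<in>A. f x = x} = A" by auto
    then show ?thesis by simp
  next
    case True
    then obtain x where x: "x \<in> A" "f x \<noteq> x" by blast
    define A' where "A' = A - {x, f x}"
    have fx: "f x \<in> A" using less x by auto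
    have c2: "card {x, f x} = 2" using x by simp
    have "card {x, f x} \<le> card A" using less(2) x fx by (intro card_mono) auto
    then have cA: "card A = card A' + 2"
      using less(2) x fx c2 unfolding A'_def
      by (subst card_Diff_subset) auto
    have "even (card A') \<longleftrightarrow> even (card {y\<in>A'. f y = y})"
    proof (rule less(1))
      show "card A' < card A" using cA by simp
      show "finite A'" using less(2) by (simp add: A'_def)
      fix y assume y: "y \<in> A'"
      show "f (f y) = y" using y less(4) by (auto simp: A'_def)
      have yA: "y \<in> A" "y \<noteq> x" "y \<noteq> f x" using y by (auto simp: A'_def)
      have "f y \<noteq> x" using yA less(4) by metis
      moreover have "f y \<noteq> f x" using yA less(4) x(1) by metis
      ultimately show "f y \<in> A'" using yA less(3) by (auto simp: A'_def)
    qed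
    moreover have "{y\<in>A'. f y = y} = {y\<in>A. f y = y}"
      using x less(4) unfolding A'_def by auto
    ultimately show ?thesis using cA by simp
  qed
qed


lemma nz_pow_card_minus1:
  fixes x :: "'a::{field,finite}"
  assumes "x \<noteq> 0"
  shows "x ^ (card (UNIV :: 'a set) - 1) = 1"
proof -
  have cd: "card (UNIV - {0::'a}) = card (UNIV :: 'a set) - 1" by (simp add: card_Diff_singleton)
  have "(\<Prod>y\<in>UNIV-{0}. x * y) = (\<Prod>y\<in>UNIV-{0::'a}. y)"
    by (rule prod.reindex_bij_witness[of _ "\<lambda>y. y / x" "\<lambda>y. x * y"]) (use assms in auto)
  moreover have "(\<Prod>y\<in>UNIV-{0}. x * y) = x ^ (card (UNIV :: 'a set) - 1) * (\<Prod>y\<in>UNIV-{0::'a}. y)"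
    by (simp add: prod.distrib cd)
  moreover have "(\<Prod>y\<in>UNIV-{0::'a}. y) \<noteq> 0" by (simp)
  ultimately show ?thesis by (metis mult_cancel_right1)
qed

lemma of_nat_card_UNIV:
  "of_nat (card (UNIV :: 'a::{field,finite} set)) = (0::'a)"
proof -
  have "(\<Sum>y\<in>UNIV. 1 + y) = (\<Sum>y\<in>UNIV. y :: 'a)"
    by (rule sum.reindex_bij_witness[of _ "\<lambda>y. y - 1" "\<lambda>y. 1 + y"]) auto
  moreover have "(\<Sum>y\<in>UNIV. 1 + y) = of_nat (card (UNIV :: 'a set)) + (\<Sum>y\<in>UNIV. y :: 'a)"
    by (simp add: sum.distrib)
  ultimately show ?thesis by simp
qed

lemma even_mod_even: "even (T::nat) \<Longrightarrow> even (x mod T) \<longleftrightarrow> even x"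
  using mod_mod_cancel[of 2 T x] by (simp add: even_iff_mod_2_eq_zero)

locale sl =
  fixes \<alpha> :: "'a::{field,finite}" and p m :: nat
  assumes p_prime: "prime p" and p_odd: "odd p" and m_pos: "m \<ge> 1"
    and card_eq: "card (UNIV :: 'a set) = p ^ m"
    and prim: "primitive_element \<alpha>"
begin

definition T :: nat where "T = p ^ m - 1"

lemma CHAR_eq: "CHAR('a) = p"
proof -
  have pos: "CHAR('a) > 0" by (rule finite_imp_CHAR_pos) simp
  have pr: "prime CHAR('a)" by (rule prime_CHAR_semidom[OF pos])
  have "of_nat (p ^ m) = (0::'a)" using of_nat_card_UNIV[where 'a='a] card_eq by metis
  then have "CHAR('a) dvd p ^ m" by (simp only: of_nat_eq_0_iff_char_dvd)
  then have "CHAR('a) dvd p" using pr prime_dvd_power by blast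
  then show ?thesis using pr p_prime primes_dvd_imp_eq by blast
qed

lemma frob: "(x + y :: 'a) ^ (p ^ e) = x ^ (p ^ e) + y ^ (p ^ e)"
  by (rule freshmans_dream') (auto simp: CHAR_eq p_prime)

lemma p_ge3: "p \<ge> 3"
  using p_prime p_odd prime_ge_2_nat[OF p_prime] by (cases "p = 2") auto

lemma q_ge3: "p ^ m \<ge> 3"
proof -
  have "p ^ 1 \<le> p ^ m" using m_pos p_ge3 by (intro power_increasing) auto
  then show ?thesis using p_ge3 by simp
qed

lemma T_ge2: "T \<ge> 2" using q_ge3 by (simp add: T_def)

lemma T_even: "even T"
  using p_odd q_ge3 by (simp add: T_def)

lemma powT: "x \<noteq> 0 \<Longrightarrow> x ^ T = (1::'a)"
  using nz_pow_card_minus1[of x] by (simp add: T_def card_eq)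

lemma minus_one_ne_one: "(-1::'a) \<noteq> 1"
proof
  assume "(-1::'a) = 1"
  then have "(1::'a) + 1 = 0" by (metis add.right_inverse)
  then have "(of_nat 2 :: 'a) = 0" by (simp only: of_nat_numeral one_add_one)
  then have "CHAR('a) dvd 2" by (simp only: of_nat_eq_0_iff_char_dvd)
  then have "p dvd 2" by (simp only: CHAR_eq)
  then have "p \<le> 2" by (rule dvd_imp_le) simp
  then show False using p_ge3 by simp
qed

lemma two_ne_zero: "(2::'a) \<noteq> 0"
proof
  assume "(2::'a) = 0"
  then have "(1::'a) + 1 = 0" by simp
  then have "(-1::'a) = 1" by (simp only: neg_eq_iff_add_eq_0)
  then show False using minus_one_ne_one by simp
qed

lemma alpha_nz: "\<alpha> \<noteq> 0"
proof
  assume a0: "\<alpha> = 0"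
  have "\<exists>n. \<alpha> ^ n = (-1::'a)" using prim unfolding primitive_element_def by simp
  then obtain n where "\<alpha> ^ n = (-1::'a)" by blast
  then show False using a0 minus_one_ne_one by (cases n) auto
qed

lemma alpha_T: "\<alpha> ^ T = 1" using powT alpha_nz by simp

lemma alpha_pow_mod: "\<alpha> ^ n = \<alpha> ^ (n mod T)"
proof -
  have "\<alpha> ^ n = \<alpha> ^ (T * (n div T) + n mod T)" by simp
  also have "\<dots> = \<alpha> ^ (n mod T)" by (simp only: power_add power_mult alpha_T) simp
  finally show ?thesis .
qed

lemma inj_alpha: "inj_on (\<lambda>n. \<alpha> ^ n) {..<T}"
proof -
  have img: "(\<lambda>n. \<alpha> ^ n) ` {..<T} = UNIV - {0}"
  proof
    show "(\<lambda>n. \<alpha> ^ n) ` {..<T} \<subseteq> UNIV - {0}" using alpha_nz by auto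
    show "UNIV - {0} \<subseteq> (\<lambda>n. \<alpha> ^ n) ` {..<T}"
    proof
      fix x :: 'a assume "x \<in> UNIV - {0}"
      then obtain n where "\<alpha> ^ n = x" using prim unfolding primitive_element_def by blast
      moreover have "n mod T < T" using T_ge2 by simp
      ultimately show "x \<in> (\<lambda>n. \<alpha> ^ n) ` {..<T}" using alpha_pow_mod[of n] by auto
    qed
  qed
  have "card (UNIV - {0::'a}) = T" by (simp add: card_Diff_singleton card_eq T_def)
  then have "card ((\<lambda>n. \<alpha> ^ n) ` {..<T}) = card {..<T}" using img by simp
  then show ?thesis by (intro eq_card_imp_inj_on) auto
qed

lemma alpha_pow_eq: "\<alpha> ^ a = \<alpha> ^ b \<longleftrightarrow> a mod T = b mod T"
proof
  assume "\<alpha> ^ a = \<alpha> ^ b"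
  then have "\<alpha> ^ (a mod T) = \<alpha> ^ (b mod T)" using alpha_pow_mod[of a] alpha_pow_mod[of b] by simp
  moreover have "a mod T \<in> {..<T}" "b mod T \<in> {..<T}" using T_ge2 by auto
  ultimately show "a mod T = b mod T" using inj_onD[OF inj_alpha] by blast
next
  assume "a mod T = b mod T"
  then show "\<alpha> ^ a = \<alpha> ^ b" using alpha_pow_mod[of a] alpha_pow_mod[of b] by simp
qed

lemma alpha_half: "\<alpha> ^ (T div 2) = -1"
proof -
  define z where "z = \<alpha> ^ (T div 2)"
  have tt: "T div 2 + T div 2 = T" using T_even by auto
  have "z * z = 1" unfolding z_def using alpha_T
    by (simp only: power_add[symmetric] tt)
  then have "(z - 1) * (z + 1) = 0" by (simp add: algebra_simps)
  then have zz: "z - 1 = 0 \<or> z + 1 = 0" by simp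
  have "z \<noteq> 1"
  proof
    assume "z = 1"
    then have "\<alpha> ^ (T div 2) = \<alpha> ^ 0" by (simp add: z_def)
    then have "(T div 2) mod T = 0 mod T" using alpha_pow_eq by blast
    moreover have "(T div 2) mod T = T div 2" using T_ge2 by simp
    moreover have "T div 2 \<noteq> 0" using T_ge2 by simp
    ultimately show False by simp
  qed
  with zz have "z + 1 = 0" by simp
  then have "z = -1" by (simp only: eq_neg_iff_add_eq_0)
  then show ?thesis unfolding z_def .
qed

lemma pow_half_alpha: "(\<alpha> ^ n) ^ (T div 2) = (-1) ^ n"
proof -
  have "(\<alpha> ^ n) ^ (T div 2) = \<alpha> ^ (n * (T div 2))" by (simp only: power_mult)
  also have "\<dots> = (\<alpha> ^ (T div 2)) ^ n" by (simp only: mult.commute[of n] power_mult)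
  finally show ?thesis by (simp only: alpha_half)
qed

lemma log_exists: "x \<noteq> 0 \<Longrightarrow> \<exists>n<T. \<alpha> ^ n = x"
proof -
  assume "x \<noteq> 0"
  then obtain n where "\<alpha> ^ n = x" using prim unfolding primitive_element_def by blast
  moreover have "n mod T < T" using T_ge2 by simp
  ultimately show ?thesis using alpha_pow_mod[of n] by auto
qed

lemma nonsq_alpha: "nonzero_nonsquare (\<alpha> ^ n) \<longleftrightarrow> odd n"
proof
  assume ns: "nonzero_nonsquare (\<alpha> ^ n)"
  show "odd n"
  proof
    assume "even n"
    then have "(\<alpha> ^ (n div 2)) ^ 2 = \<alpha> ^ n" by (simp flip: power_mult)
    then show False using ns unfolding nonzero_nonsquare_def by blast
  qed
next
  assume o: "odd n"
  have "\<alpha> ^ n \<noteq> 0" using alpha_nz by simp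
  moreover have "\<not> (\<exists>y. y ^ 2 = \<alpha> ^ n)"
  proof
    assume "\<exists>y. y ^ 2 = \<alpha> ^ n"
    then obtain y where y: "y ^ 2 = \<alpha> ^ n" by blast
    then have "y \<noteq> 0" using alpha_nz by auto
    then obtain a where "\<alpha> ^ a = y" using log_exists by blast
    then have "\<alpha> ^ (2 * a) = \<alpha> ^ n" using y by (simp add: power_mult mult.commute)
    then have "(2 * a) mod T = n mod T" using alpha_pow_eq by blast
    moreover have "even ((2 * a) mod T)" using even_mod_even[OF T_even] by simp
    ultimately have "even (n mod T)" by simp
    then show False using o even_mod_even[OF T_even] by simp
  qed
  ultimately show "nonzero_nonsquare (\<alpha> ^ n)" unfolding nonzero_nonsquare_def by blast
qed

lemma nonsq_iff: "nonzero_nonsquare y \<longleftrightarrow> y \<noteq> 0 \<and> y ^ (T div 2) = -1" for y :: 'a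
proof (cases "y = 0")
  case True then show ?thesis by (simp add: nonzero_nonsquare_def)
next
  case False
  then obtain n where n: "\<alpha> ^ n = y" using log_exists by blast
  have "nonzero_nonsquare y \<longleftrightarrow> odd n" using nonsq_alpha[of n] unfolding n .
  also have "\<dots> \<longleftrightarrow> (-1::'a) ^ n = -1" using minus_one_ne_one
    by (cases "even n") auto
  moreover have "y ^ (T div 2) = (-1) ^ n" using pow_half_alpha[of n] unfolding n .
  ultimately show ?thesis using False by (simp only: simp_thms)
qed

lemma half_pm: "y \<noteq> 0 \<Longrightarrow> y ^ (T div 2) = 1 \<or> y ^ (T div 2) = -1" for y :: 'a
proof -
  assume "y \<noteq> 0"
  then obtain n where n: "\<alpha> ^ n = y" using log_exists by blast
  have "y ^ (T div 2) = (-1) ^ n" using pow_half_alpha[of n] unfolding n .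
  then show ?thesis by (cases "even n") auto
qed

end


lemma card_eq_inj2:
  assumes "finite A" "finite B" "inj_on f A" "f ` A \<subseteq> B" "inj_on g B" "g ` B \<subseteq> A"
  shows "card A = card B"
  using card_inj_on_le[OF assms(3,4,2)] card_inj_on_le[OF assms(5,6,1)] by simp

lemma inj_shift: "inj_on (\<lambda>t. (t + c) mod D) {..<(D::nat)}"
proof (rule inj_onI)
  fix a b assume "a \<in> {..<D}" "b \<in> {..<D}" "(a + c) mod D = (b + c) mod D"
  then have "[a + c = b + c] (mod D)" by (simp add: cong_def)
  then have "[a = b] (mod D)" by (simp add: cong_add_rcancel_nat)
  then show "a = b" using \<open>a \<in> {..<D}\<close> \<open>b \<in> {..<D}\<close> by (simp add: cong_def)
qed

lemma inj_shift_on: "S \<subseteq> {..<(D::nat)} \<Longrightarrow> inj_on (\<lambda>t. (t + c) mod D) S"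
  using inj_shift inj_on_subset by blast

lemma even_mod_even': "even (D::nat) \<Longrightarrow> even (x mod D) \<longleftrightarrow> even x"
  using mod_mod_cancel[of 2 D x] by (simp add: even_iff_mod_2_eq_zero)

lemma dvd_mod_dvd: "(N::nat) dvd D \<Longrightarrow> N dvd (x mod D) \<longleftrightarrow> N dvd x"
  using mod_mod_cancel[of N D x] by (simp add: dvd_eq_mod_eq_0)

lemma mod_2x: "(2 * x + j) mod N = (2 * (x mod N) + j) mod (N::nat)"
  by (metis mod_add_left_eq mod_mult_right_eq)

definition Gset :: "nat \<Rightarrow> nat \<Rightarrow> nat \<Rightarrow> nat set" where
  "Gset D N j = {t. t < D \<and> N dvd 2 * t + j \<and> t \<noteq> D div 2 \<and> odd t}"

lemma Gset_even:
  assumes "4 dvd D" "N dvd D" "D > 0"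
  shows "even (card (Gset D N j))"
proof -
  define H where "H = D div 2"
  have DH: "D = 2 * H" using assms(1) unfolding H_def by auto
  have Hev: "even H" using assms(1) DH by auto
  have Hpos: "H > 0" "H < D" using assms(3) DH by auto
  define \<phi> where "\<phi> t = (t + H) mod D" for t
  have phiphi: "\<phi> (\<phi> t) = t" if "t < D" for t
  proof -
    have "\<phi> (\<phi> t) = (t + H + H) mod D" unfolding \<phi>_def by (simp add: mod_add_left_eq)
    also have "t + H + H = t + D" using DH by simp
    finally show ?thesis using that by simp
  qed
  have mem: "\<phi> t \<in> Gset D N j" if t: "t \<in> Gset D N j" for t
  proof -
    have t1: "t < D" "N dvd 2 * t + j" "t \<noteq> H" "odd t" using t by (auto simp: Gset_def H_def)
    have a1: "\<phi> t < D" unfolding \<phi>_def using Hpos by simp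
    have a2: "odd (\<phi> t)" unfolding \<phi>_def using even_mod_even'[of D "t + H"] DH Hev t1(4) by simp
    have "(2 * \<phi> t + j) mod N = (2 * ((t + H) mod D mod N) + j) mod N"
      unfolding \<phi>_def by (rule mod_2x)
    also have "(t + H) mod D mod N = (t + H) mod N" using assms(2) by (simp add: mod_mod_cancel)
    also have "(2 * ((t + H) mod N) + j) mod N = (2 * (t + H) + j) mod N" by (rule mod_2x[symmetric])
    also have "(2 * (t + H) + j) mod N = (2 * t + j) mod N"
    proof -
      obtain r where "D = N * r" using assms(2) by blast
      then have "2 * (t + H) + j = (2 * t + j) + N * r" using DH by simp
      then show ?thesis by (simp only: mod_mult_self2)
    qed
    finally have a3: "N dvd 2 * \<phi> t + j" using t1(2) by (simp add: dvd_eq_mod_eq_0)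
    have a4: "\<phi> t \<noteq> H"
    proof
      assume "\<phi> t = H"
      then have "\<phi> (\<phi> t) = (H + H) mod D" unfolding \<phi>_def by simp
      moreover have "(H + H) mod D = 0" using DH by (simp add: mult_2[symmetric])
      ultimately have "t = 0" using phiphi[OF t1(1)] by simp
      then show False using t1(4) by simp
    qed
    show ?thesis using a1 a2 a3 a4 unfolding Gset_def H_def by simp
  qed
  have nofix: "{t \<in> Gset D N j. \<phi> t = t} = {}"
  proof (rule ccontr)
    assume "{t \<in> Gset D N j. \<phi> t = t} \<noteq> {}"
    then obtain t where "t < D" "(t + H) mod D = t" unfolding Gset_def \<phi>_def by auto
    then have "[t + H = t + 0] (mod D)" by (simp add: cong_def)
    then have "[H = 0] (mod D)" by (simp only: cong_add_lcancel_nat)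
    then show False using Hpos by (simp add: cong_def)
  qed
  have fin: "finite (Gset D N j)" unfolding Gset_def by auto
  have "even (card (Gset D N j)) \<longleftrightarrow> even (card {t \<in> Gset D N j. \<phi> t = t})"
  proof (rule inv_parity[OF fin])
    fix x assume x: "x \<in> Gset D N j"
    then show "\<phi> x \<in> Gset D N j" by (rule mem)
    show "\<phi> (\<phi> x) = x" using x by (intro phiphi) (simp add: Gset_def)
  qed
  then show ?thesis using nofix by simp
qed

lemma Gset_02:
  assumes "D mod 4 = 2" "2 * k dvd D" "odd k" "k > 1"
  shows "even (card (Gset D (2 * k) 0)) \<longleftrightarrow> odd (card (Gset D (2 * k) 2))"
proof -
  define H where "H = D div 2"
  have DH: "D = 2 * H" using assms(1) unfolding H_def by presburger
  have Hodd: "odd H" using assms(1) DH by presburger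
  have Hlt: "H < D" using DH Hodd by (cases H) auto
  have kD: "k dvd D" using assms(2) by (metis dvd_mult_right)
  have kH: "k dvd H" using assms(2) DH by simp
  have Dev: "even D" using DH by simp
  define O0 where "O0 = {t. t < D \<and> k dvd t \<and> odd t}"
  define E0 where "E0 = {t. t < D \<and> k dvd t \<and> even t}"
  define O2 where "O2 = {t. t < D \<and> k dvd t + 1 \<and> odd t}"
  have fO0: "finite O0" "finite E0" "finite O2" unfolding O0_def E0_def O2_def by auto
  have G0: "Gset D (2 * k) 0 = O0 - {H}"
    unfolding Gset_def O0_def H_def by auto
  have HO0: "H \<in> O0" unfolding O0_def using Hlt kH Hodd by simp
  have G2: "Gset D (2 * k) 2 = O2"
  proof -
    have e: "2 * k dvd 2 * t + 2 \<longleftrightarrow> k dvd t + 1" for t :: nat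
    proof -
      have "2 * t + 2 = 2 * (t + 1)" by simp
      moreover have "2 * k dvd 2 * (t + 1) \<longleftrightarrow> k dvd t + 1" by (rule dvd_times_left_cancel_iff) simp
      ultimately show ?thesis by (simp only:)
    qed
    moreover have "t \<noteq> H" if "k dvd t + 1" for t
    proof
      assume "t = H"
      then have "k dvd (H + 1) - H" using that kH by (intro dvd_diff_nat) simp_all
      then have "k dvd 1" by simp
      then show False using assms(4) by simp
    qed
    ultimately show ?thesis unfolding Gset_def O2_def H_def by blast
  qed
  have c1: "card O0 = card E0"
  proof (rule card_eq_inj2[OF fO0(1,2)])
    show "inj_on (\<lambda>t. (t + H) mod D) O0" by (rule inj_shift_on) (auto simp: O0_def)
    show "inj_on (\<lambda>t. (t + H) mod D) E0" by (rule inj_shift_on) (auto simp: E0_def)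
    show "(\<lambda>t. (t + H) mod D) ` O0 \<subseteq> E0"
    proof
      fix s assume "s \<in> (\<lambda>t. (t + H) mod D) ` O0"
      then obtain t where t: "t \<in> O0" "s = (t + H) mod D" by blast
      have "s < D" using t Hlt by simp
      moreover have "k dvd s" using t kD kH dvd_mod_dvd[OF kD] by (simp add: O0_def)
      moreover have "even s" using t even_mod_even'[OF Dev] Hodd by (simp add: O0_def)
      ultimately show "s \<in> E0" by (simp add: E0_def)
    qed
    show "(\<lambda>t. (t + H) mod D) ` E0 \<subseteq> O0"
    proof
      fix s assume "s \<in> (\<lambda>t. (t + H) mod D) ` E0"
      then obtain t where t: "t \<in> E0" "s = (t + H) mod D" by blast
      have "s < D" using t Hlt by simp
      moreover have "k dvd s" using t kD kH dvd_mod_dvd[OF kD] by (simp add: E0_def)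
      moreover have "odd s" using t even_mod_even'[OF Dev] Hodd by (simp add: E0_def)
      ultimately show "s \<in> O0" by (simp add: O0_def)
    qed
  qed
  have c2: "card O2 = card E0"
  proof (rule card_eq_inj2[OF fO0(3,2)])
    show "inj_on (\<lambda>t. (t + 1) mod D) O2" by (rule inj_shift_on) (auto simp: O2_def)
    show "inj_on (\<lambda>t. (t + (D - 1)) mod D) E0" by (rule inj_shift_on) (auto simp: E0_def)
    show "(\<lambda>t. (t + 1) mod D) ` O2 \<subseteq> E0"
    proof
      fix s assume "s \<in> (\<lambda>t. (t + 1) mod D) ` O2"
      then obtain t where t: "t \<in> O2" "s = (t + 1) mod D" by blast
      have "s < D" using t Hlt by simp
      moreover have "k dvd s" using t dvd_mod_dvd[OF kD] by (simp add: O2_def)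
      moreover have "even s" using t even_mod_even'[OF Dev] by (simp add: O2_def)
      ultimately show "s \<in> E0" by (simp add: E0_def)
    qed
    show "(\<lambda>t. (t + (D - 1)) mod D) ` E0 \<subseteq> O2"
    proof
      fix s assume "s \<in> (\<lambda>t. (t + (D - 1)) mod D) ` E0"
      then obtain t where t: "t \<in> E0" "s = (t + (D - 1)) mod D" by blast
      have D1: "D \<ge> 1" using Hlt by simp
      have "s < D" using t Hlt by simp
      moreover have "odd s" using t even_mod_even'[OF Dev] Dev D1 by (simp add: E0_def)
      moreover have "k dvd s + 1"
      proof -
        have "(s + 1) mod k = ((t + (D - 1)) mod D mod k + 1) mod k" unfolding t(2) by (rule mod_add_left_eq[symmetric])
        also have "(t + (D - 1)) mod D mod k = (t + (D - 1)) mod k" using kD by (simp add: mod_mod_cancel)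
        also have "((t + (D - 1)) mod k + 1) mod k = (t + (D - 1) + 1) mod k" by (rule mod_add_left_eq)
        also have "(t + (D - 1) + 1) mod k = (t + D) mod k" using D1 by simp
        also have "\<dots> = 0"
        proof -
          have "k dvd t" using t by (simp add: E0_def)
          then have "k dvd t + D" using kD by (rule dvd_add)
          then show ?thesis by (simp only: dvd_eq_mod_eq_0)
        qed
        finally show ?thesis by (simp add: dvd_eq_mod_eq_0)
      qed
      ultimately show "s \<in> O2" by (simp add: O2_def)
    qed
  qed
  have "card (Gset D (2 * k) 0) = card O0 - 1" using G0 HO0 fO0 by simp
  moreover have "card O0 \<ge> 1" using HO0 fO0 by (metis One_nat_def Suc_leI card_gt_0_iff empty_iff)
  ultimately show ?thesis using G2 c1 c2 by auto
qed


lemma sum_odd_parity: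
  fixes f :: "nat \<Rightarrow> int"
  assumes "\<And>i. i < n \<Longrightarrow> odd (f i)"
  shows "even (\<Sum>i<n. f i) \<longleftrightarrow> even n"
  using assms by (induction n) auto

lemma odd_sq_mod4: "odd (y::nat) \<Longrightarrow> y ^ 2 mod 4 = 1"
proof -
  assume "odd y"
  then obtain a where "y = 2 * a + 1" using oddE by blast
  then have "y ^ 2 = 4 * (a * a + a) + 1" by (simp add: power2_eq_square algebra_simps)
  then show ?thesis by simp
qed

lemma even_exp_mod4: "odd (p::nat) \<Longrightarrow> even v \<Longrightarrow> (p ^ v + 1) mod 4 = 2"
proof -
  assume "odd p" "even v"
  then obtain b where "v = 2 * b" by blast
  then have "p ^ v = (p ^ b) ^ 2" by (simp add: power_mult mult.commute)
  moreover have "odd (p ^ b)" using \<open>odd p\<close> by simp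
  ultimately have "p ^ v mod 4 = 1" using odd_sq_mod4 by simp
  then show ?thesis by (simp add: mod_Suc)
qed

lemma dvd_odd_exp_two:
  assumes "odd (p::nat)" "odd v" "2 ^ h dvd p ^ v + 1"
  shows "2 ^ h dvd p + 1"
proof -
  define x where "x = - int p"
  define R where "R = (\<Sum>i<v. x ^ i)"
  have "1 - x ^ v = (1 - x) * R" unfolding R_def by (rule one_diff_power_eq)
  moreover have "1 - x ^ v = int (p ^ v + 1)" using assms(2) by (simp add: x_def)
  moreover have "1 - x = int (p + 1)" by (simp add: x_def)
  ultimately have eq: "int (p ^ v + 1) = int (p + 1) * R" by simp
  have "odd R" unfolding R_def using sum_odd_parity[of v "\<lambda>i. x ^ i"] assms(1,2)
    by (simp add: x_def)
  then have cop: "coprime (int (2 ^ h)) R" by simp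
  have "int (2 ^ h) dvd int (p ^ v + 1)" using assms(3) by (simp only: int_dvd_int_iff)
  then have "int (2 ^ h) dvd int (p + 1) * R" using eq by simp
  then have "int (2 ^ h) dvd int (p + 1)" using cop by (simp add: coprime_dvd_mult_left_iff)
  then show ?thesis by (simp only: int_dvd_int_iff)
qed

lemma two_pow_dvd_p1:
  assumes "odd (p::nat)" "h \<ge> 1" "2 ^ h dvd p ^ v + 1"
  shows "2 ^ h dvd p + 1"
proof (cases "h = 1")
  case True then show ?thesis using assms by simp
next
  case False
  then have "(4::nat) dvd 2 ^ h" using assms(2)
    by (metis One_nat_def Suc_1 le_antisym not_less_eq_eq numeral_Bit0_eq_double power2_eq_square le_imp_power_dvd mult_2 numeral_Bit0)
  then have "4 dvd p ^ v + 1" using assms(3) dvd_trans by blast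
  then have "odd v" using even_exp_mod4[OF assms(1)] by fastforce
  then show ?thesis using dvd_odd_exp_two assms by blast
qed

lemma h2_odd_v:
  assumes "odd (p::nat)" "h \<ge> 2" "2 ^ h dvd p ^ v + 1"
  shows "odd v"
proof -
  have "(4::nat) dvd 2 ^ h" using assms(2) le_imp_power_dvd[of 2 h 2] by simp
  then have "4 dvd p ^ v + 1" using assms(3) dvd_trans by blast
  then show "odd v" using even_exp_mod4[OF assms(1)] by fastforce
qed

locale ntu =
  fixes p k u :: nat
  assumes k_odd: "odd k" and k_gt: "k > 1" and u_pos: "u > 0"
    and ku: "k dvd p ^ u + 1"
    and umin: "\<And>s. 0 < s \<Longrightarrow> s < u \<Longrightarrow> \<not> k dvd p ^ s + 1"
begin

lemma dvd_cong: "k dvd p ^ s + 1 \<longleftrightarrow> [int p ^ s = -1] (mod int k)"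
proof -
  have "k dvd p ^ s + 1 \<longleftrightarrow> int k dvd int (p ^ s + 1)" by (simp only: int_dvd_int_iff)
  also have "\<dots> \<longleftrightarrow> int k dvd (int p ^ s - (-1))" by (simp add: add.commute)
  also have "\<dots> \<longleftrightarrow> [int p ^ s = -1] (mod int k)" by (simp only: cong_iff_dvd_diff)
  finally show ?thesis .
qed

lemma Pu: "[int p ^ u = -1] (mod int k)" using ku dvd_cong by blast

lemma not_1_m1: "\<not> [1 = -1] (mod int k)"
proof
  assume "[1 = -1] (mod int k)"
  then have "int k dvd 2" by (simp add: cong_iff_dvd_diff)
  then have "k dvd 2" by (metis int_dvd_int_iff of_nat_numeral)
  then have "k \<le> 2" by (rule dvd_imp_le) simp
  then show False using k_odd k_gt by (cases "k = 2") auto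
qed

lemma P2u: "[int p ^ (2 * u) = 1] (mod int k)"
proof -
  have "[(int p ^ u) ^ 2 = (-1) ^ 2] (mod int k)" using Pu by (rule cong_pow)
  then show ?thesis by (simp add: power_mult mult.commute)
qed

lemma Pmod: "[int p ^ e = int p ^ (e mod (2 * u))] (mod int k)"
proof -
  have "int p ^ e = (int p ^ (2 * u)) ^ (e div (2 * u)) * int p ^ (e mod (2 * u))"
    by (simp only: power_mult[symmetric] power_add[symmetric]) simp
  moreover have "[(int p ^ (2 * u)) ^ (e div (2 * u)) * int p ^ (e mod (2 * u))
       = 1 ^ (e div (2 * u)) * int p ^ (e mod (2 * u))] (mod int k)"
    using P2u by (intro cong_mult cong_pow cong_refl)
  ultimately show ?thesis by simp
qed

lemma L0:
  assumes "0 < s" "s < u"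
  shows "\<not> [int p ^ s = 1] (mod int k)" "\<not> [int p ^ s = -1] (mod int k)"
proof -
  show "\<not> [int p ^ s = -1] (mod int k)" using umin[OF assms] dvd_cong by blast
  show "\<not> [int p ^ s = 1] (mod int k)"
  proof
    assume a: "[int p ^ s = 1] (mod int k)"
    have "int p ^ u = int p ^ s * int p ^ (u - s)" using assms by (simp add: power_add[symmetric])
    moreover have "[int p ^ s * int p ^ (u - s) = 1 * int p ^ (u - s)] (mod int k)"
      using a by (intro cong_mult cong_refl)
    ultimately have "[int p ^ (u - s) = -1] (mod int k)" using Pu
      by (metis cong_sym cong_trans mult_1)
    moreover have "0 < u - s" "u - s < u" using assms by auto
    ultimately show False using umin dvd_cong by blast
  qed
qed

lemma split_r:
  assumes "u \<le> r"
  shows "[int p ^ r = - (int p ^ (r - u))] (mod int k)"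
proof -
  have "int p ^ r = int p ^ u * int p ^ (r - u)" using assms by (simp add: power_add[symmetric])
  moreover have "[int p ^ u * int p ^ (r - u) = (-1) * int p ^ (r - u)] (mod int k)"
    using Pu by (intro cong_mult cong_refl)
  ultimately show ?thesis by simp
qed

lemma cong_neg_iff: "[- a = - b] (mod int k) \<longleftrightarrow> [a = b] (mod int k)" for a b :: int
  by (simp add: cong_iff_dvd_diff dvd_diff_commute)

lemma claimB:
  assumes "[int p ^ e = 1] (mod int k)"
  shows "2 * u dvd e"
proof -
  define r where "r = e mod (2 * u)"
  have r: "[int p ^ r = 1] (mod int k)" using assms Pmod[of e] unfolding r_def
    by (metis cong_sym cong_trans)
  have r2: "r < 2 * u" unfolding r_def using u_pos by simp
  have "r = 0"
  proof (rule ccontr)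
    assume "r \<noteq> 0"
    show False
    proof (cases "r < u")
      case True then show False using L0(1)[of r] r \<open>r \<noteq> 0\<close> by simp
    next
      case False
      then have "[- (int p ^ (r - u)) = 1] (mod int k)" using split_r[of r] r
        by (metis cong_sym cong_trans not_le_imp_less not_less)
      then have "[int p ^ (r - u) = -1] (mod int k)"
        using cong_neg_iff[of "int p ^ (r - u)" "-1"] by simp
      moreover have "r - u < u" using r2 by simp
      ultimately have "r - u = 0" using L0(2)[of "r - u"] by (cases "r - u = 0") auto
      then have "r = u" using False by simp
      then show False using r Pu not_1_m1 by (metis cong_sym cong_trans)
    qed
  qed
  then show ?thesis unfolding r_def by auto
qed

lemma claimA:
  assumes "[int p ^ e = -1] (mod int k)"
  shows "\<exists>a. e = u * (2 * a + 1)"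
proof -
  define r where "r = e mod (2 * u)"
  have r: "[int p ^ r = -1] (mod int k)" using assms Pmod[of e] unfolding r_def
    by (metis cong_sym cong_trans)
  have r2: "r < 2 * u" unfolding r_def using u_pos by simp
  have "r = u"
  proof (cases "r < u")
    case True
    show ?thesis
    proof (cases "r = 0")
      case True then show ?thesis using r not_1_m1 by simp
    next
      case False then show ?thesis using L0(2)[of r] r \<open>r < u\<close> by simp
    qed
  next
    case False
    then have "[- (int p ^ (r - u)) = -1] (mod int k)" using split_r[of r] r
      by (metis cong_sym cong_trans not_le_imp_less not_less)
    then have "[int p ^ (r - u) = 1] (mod int k)"
      using cong_neg_iff[of "int p ^ (r - u)" "1"] by simp
    moreover have "r - u < u" using r2 by simp
    ultimately have "r - u = 0" using L0(1)[of "r - u"] by (cases "r - u = 0") auto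
    then show "r = u" using False by simp
  qed
  then have "e = u * (2 * (e div (2 * u)) + 1)" unfolding r_def
    by (metis add.commute div_mult_mod_eq mult.assoc mult.commute mult.left_commute distrib_left mult_1_right)
  then show ?thesis by blast
qed

end

lemma dvd_odd_pow_plus1: "odd n \<Longrightarrow> (a + 1) dvd (a ^ n + (1::int))"
proof -
  assume "odd n"
  have "1 - (-a) ^ n = (1 - (-a)) * (\<Sum>i<n. (-a) ^ i)" by (rule one_diff_power_eq)
  then have "a ^ n + 1 = (a + 1) * (\<Sum>i<n. (-a) ^ i)" using \<open>odd n\<close> by (simp add: add.commute)
  then show ?thesis by (metis dvd_triv_left)
qed

lemma dvd_pow_minus1: "(a - 1) dvd (a ^ n - (1::int))"
  using power_diff_1_eq[of a n] by simp

lemma pow_mod4_3: "(3::nat) ^ n mod 4 = (if even n then 1 else 3)"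
proof (induction n)
  case 0 then show ?case by simp
next
  case (Suc n)
  have "3 ^ Suc n mod 4 = (3 * (3 ^ n mod 4)) mod (4::nat)" by (simp add: mod_mult_right_eq)
  then show ?case using Suc by auto
qed

lemma Q_mod4:
  assumes "p mod 4 = 1 \<or> p mod 4 = (3::nat)"
  shows "p ^ n mod 4 = 1 \<longleftrightarrow> p mod 4 = 1 \<or> even n"
proof -
  have "p ^ n mod 4 = (p mod 4) ^ n mod 4" by (simp add: power_mod)
  then show ?thesis using assms pow_mod4_3[of n] by auto
qed

lemma nt_main:
  fixes p m k h v :: nat
  assumes p_odd: "odd p" and m_pos: "m \<ge> 1" and k_odd: "odd k" and k_gt: "k > 1"
    and kdvd: "k dvd p ^ m - 1" and h_pos: "h \<ge> 1" and v_pos: "v > 0"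
    and hv: "2 ^ h * k dvd p ^ v + 1"
  defines "u \<equiv> LEAST v'. v' > 0 \<and> k dvd p ^ v' + 1"
  shows "\<exists>w>0. m = 2 * u * w \<and> (even w \<longrightarrow> 2 ^ h * k dvd p ^ (u * w) - 1)
            \<and> (odd w \<longrightarrow> 2 ^ h * k dvd p ^ (u * w) + 1)"
proof -
  have kv: "k dvd p ^ v + 1" by (rule dvd_trans[OF dvd_triv_right hv])
  have uprop: "u > 0 \<and> k dvd p ^ u + 1" unfolding u_def
    by (rule LeastI[of _ v]) (use v_pos kv in auto)
  have umin: "\<And>s. 0 < s \<Longrightarrow> s < u \<Longrightarrow> \<not> k dvd p ^ s + 1"
    unfolding u_def using not_less_Least by blast
  interpret ntu p k u using uprop umin k_odd k_gt by unfold_locales auto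
  have p_pos: "p > 0" using p_odd by (cases p) auto
  have pm1: "p ^ m \<ge> 1" using p_pos by simp
  have "int k dvd int (p ^ m - 1)" using kdvd by (simp only: int_dvd_int_iff)
  then have "int k dvd int p ^ m - 1" using pm1 by (simp add: of_nat_diff)
  then have "[int p ^ m = 1] (mod int k)" by (simp add: cong_iff_dvd_diff)
  then have "2 * u dvd m" by (rule claimB)
  then obtain w where w: "m = 2 * u * w" by blast
  have w_pos: "w > 0" using w m_pos by (cases w) auto
  have h2: "2 ^ h dvd p + 1" using two_pow_dvd_p1[OF p_odd h_pos dvd_trans[OF dvd_triv_left hv]] .
  have cop: "coprime (int (2 ^ h)) (int k)" using k_odd by simp
  define Q where "Q = p ^ (u * w)"
  have Q1: "Q \<ge> 1" using p_pos by (simp add: Q_def)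
  have ev: "2 ^ h * k dvd Q - 1" if "even w"
  proof -
    obtain b where b: "w = 2 * b" using \<open>even w\<close> by blast
    have e1: "u * w = 2 * (u * b)" "u * w = (2 * u) * b" using b by (simp_all add: ac_simps)
    have Qb: "int Q = (int p ^ 2) ^ (u * b)" unfolding Q_def e1(1)
      by (simp only: of_nat_power power_mult)
    have "[(int p ^ (2 * u)) ^ b = 1 ^ b] (mod int k)" using P2u by (rule cong_pow)
    then have "[int Q = 1] (mod int k)" unfolding Q_def e1(2)
      by (simp only: of_nat_power power_mult power_one)
    then have d1: "int k dvd int Q - 1" by (simp add: cong_iff_dvd_diff)
    have "int (2 ^ h) dvd int p + 1" using h2 by (metis int_dvd_int_iff of_nat_1 of_nat_add)
    also have "int p + 1 dvd int p ^ 2 - 1"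
    proof
      show "int p ^ 2 - 1 = (int p + 1) * (int p - 1)" by (simp add: power2_eq_square algebra_simps)
    qed
    also have "int p ^ 2 - 1 dvd int Q - 1" unfolding Qb by (rule dvd_pow_minus1)
    finally have d2: "int (2 ^ h) dvd int Q - 1" .
    have "int (2 ^ h) * int k dvd int Q - 1" using d2 d1 cop by (rule divides_mult)
    then have "int (2 ^ h * k) dvd int (Q - 1)" using Q1 by (simp add: of_nat_diff)
    then show ?thesis by (simp only: int_dvd_int_iff)
  qed
  have od: "2 ^ h * k dvd Q + 1" if "odd w"
  proof -
    have "[(int p ^ u) ^ w = (-1) ^ w] (mod int k)" using Pu by (rule cong_pow)
    then have "[int Q = -1] (mod int k)" using \<open>odd w\<close> unfolding Q_def by (simp add: power_mult)
    then have d1: "int k dvd int Q + 1" by (simp add: cong_iff_dvd_diff)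
    have d2: "int (2 ^ h) dvd int Q + 1"
    proof (cases "h = 1")
      case True
      have "odd Q" using p_odd by (simp add: Q_def)
      then show ?thesis using True by simp
    next
      case False
      then have "h \<ge> 2" using h_pos by simp
      then have "odd v" using h2_odd_v[OF p_odd _ dvd_trans[OF dvd_triv_left hv]] by blast
      have "k dvd p ^ v + 1" using kv .
      then have "[int p ^ v = -1] (mod int k)" using dvd_cong by blast
      then obtain a where "v = u * (2 * a + 1)" using claimA by blast
      then have "odd u" using \<open>odd v\<close> by simp
      then have "odd (u * w)" using \<open>odd w\<close> by simp
      have "int (2 ^ h) dvd int p + 1" using h2 by (metis int_dvd_int_iff of_nat_1 of_nat_add)
      also have "int p + 1 dvd int p ^ (u * w) + 1" using \<open>odd (u * w)\<close> by (rule dvd_odd_pow_plus1)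
      finally show ?thesis by (simp add: Q_def)
    qed
    have "int (2 ^ h) * int k dvd int Q + 1" using d2 d1 cop by (rule divides_mult)
    then have "int (2 ^ h * k) dvd int (Q + 1)" by (simp add: add.commute)
    then show ?thesis by (simp only: int_dvd_int_iff)
  qed
  show ?thesis using w w_pos ev od unfolding Q_def by blast
qed


lemma of_nat_bit: "(of_nat n :: bit) = (if even n then 0 else 1)"
proof (induction n)
  case 0 then show ?case by simp
next
  case (Suc n)
  have "(of_nat (Suc n) :: bit) = 1 + of_nat n" by simp
  moreover have "(1::bit) + 1 = 0" by (simp only: one_add_one bit_2_eq_0)
  ultimately show ?case using Suc by (auto simp del: add_bit_eq_xor)
qed

lemma CHAR_bit: "CHAR(bit) = 2"
  by (rule CHAR_eqI) (auto simp: of_nat_bit split: if_splits)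

lemma CHAR_bit_poly: "CHAR(bit poly) = 2"
  by (simp add: CHAR_bit)

lemma sum_if_bit:
  assumes "finite S"
  shows "(\<Sum>n\<in>S. (if P n then 1 else 0) :: bit) = of_nat (card {n\<in>S. P n})"
proof -
  have "(\<Sum>n\<in>S. (if P n then 1 else 0) :: bit) = (\<Sum>n\<in>{n\<in>S. P n}. 1)"
    using assms by (simp add: sum.inter_filter[symmetric])
  then show ?thesis by simp
qed

lemma geom_pow:
  "geom_poly k ^ (2 ^ h) = (\<Sum>i<k. monom (1::bit) (2 ^ h * i))"
proof -
  have "geom_poly k ^ (2 ^ h) = (\<Sum>i<k. monom (1::bit) i ^ (2 ^ h))"
    unfolding geom_poly_def by (rule freshmans_dream_sum'[where n=h]) (simp_all add: CHAR_bit)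
  also have "\<dots> = (\<Sum>i<k. monom (1::bit) (2 ^ h * i))"
    by (simp add: monom_power mult.commute)
  finally show ?thesis .
qed

definition Gh :: "nat \<Rightarrow> nat \<Rightarrow> bit poly" where
  "Gh h k = (\<Sum>i<k. monom 1 (2 ^ h * i))"

lemma Gh_dvd: "Gh h k dvd monom 1 (2 ^ h * k) - 1"
proof -
  define x :: "bit poly" where "x = monom 1 (2 ^ h)"
  have "x ^ k - 1 = (x - 1) * (\<Sum>i<k. x ^ i)" by (rule power_diff_1_eq)
  moreover have "(\<Sum>i<k. x ^ i) = Gh h k" unfolding Gh_def x_def
    by (simp add: monom_power mult.commute)
  moreover have "x ^ k = monom 1 (2 ^ h * k)" unfolding x_def by (simp add: monom_power)
  ultimately show ?thesis by (metis dvd_triv_right)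
qed

lemma xpow_dvd: "(monom (1::bit) N - 1) dvd (monom 1 (N * d) - 1)"
proof -
  have "(monom (1::bit) N) ^ d - 1 = (monom 1 N - 1) * (\<Sum>i<d. (monom 1 N) ^ i)"
    by (rule power_diff_1_eq)
  then show ?thesis by (simp add: monom_power)
qed

lemma monom_diff_dvd:
  assumes "N > 0"
  shows "(monom (1::bit) N - 1) dvd (monom a n - monom a (n mod N))"
proof -
  have "monom a n = monom a (n mod N) * monom 1 (N * (n div N))"
    by (simp add: mult_monom)
  then have "monom a n - monom a (n mod N) = monom a (n mod N) * (monom 1 (N * (n div N)) - 1)"
    by (simp add: algebra_simps)
  then show ?thesis using xpow_dvd[of N "n div N"] by (metis dvd_mult)
qed

lemma reduce_mod:
  fixes s :: "nat \<Rightarrow> bit" and T :: nat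
  assumes "N > 0"
  defines "c \<equiv> \<lambda>j. \<Sum>n\<in>{n. n < T \<and> n mod N = j}. s n"
  shows "(monom 1 N - 1) dvd ((\<Sum>n<T. monom (s n) n) - (\<Sum>j<N. monom (c j) j))"
proof -
  have e1: "(\<Sum>n<T. monom (s n) (n mod N)) = (\<Sum>j<N. monom (c j) j)"
  proof -
    have "(\<Sum>j<N. \<Sum>n\<in>{n\<in>{..<T}. n mod N = j}. monom (s n) (n mod N)) = (\<Sum>n<T. monom (s n) (n mod N))"
      by (rule sum.group) (use assms in auto)
    moreover have "\<And>j. (\<Sum>n\<in>{n\<in>{..<T}. n mod N = j}. monom (s n) (n mod N)) = monom (c j) j"
    proof -
      fix j
      have "(\<Sum>n\<in>{n\<in>{..<T}. n mod N = j}. monom (s n) (n mod N)) = (\<Sum>n\<in>{n\<in>{..<T}. n mod N = j}. monom (s n) j)"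
        by (rule sum.cong) auto
      also have "\<dots> = monom (c j) j" unfolding c_def by (simp add: monom_sum)
      finally show "(\<Sum>n\<in>{n\<in>{..<T}. n mod N = j}. monom (s n) (n mod N)) = monom (c j) j" .
    qed
    ultimately show ?thesis by simp
  qed
  have "(\<Sum>n<T. monom (s n) n) - (\<Sum>n<T. monom (s n) (n mod N)) = (\<Sum>n<T. monom (s n) n - monom (s n) (n mod N))"
    by (simp add: sum_subtractf)
  moreover have "(monom 1 N - 1) dvd (\<Sum>n<T. monom (s n) n - monom (s n) (n mod N))"
    by (rule dvd_sum) (rule monom_diff_dvd[OF assms(1)])
  ultimately show ?thesis using e1 by simp
qed

lemma sum_lessThan_add: "(\<Sum>i<a + b. f i) = (\<Sum>i<a. f i) + (\<Sum>i<b. f (a + i))"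
  for f :: "nat \<Rightarrow> 'b::comm_monoid_add"
  by (induction b) (simp_all add: add.assoc)

lemma even_sum_split:
  "(\<Sum>i<Suc R * k. monom (1::bit) (2 * i)) = (\<Sum>i<k. monom 1 (2 * Suc R * i)) * (\<Sum>r<Suc R. monom 1 (2 * r))"
proof (induction k)
  case 0 then show ?case by simp
next
  case (Suc k)
  have "(\<Sum>i<Suc R * Suc k. monom (1::bit) (2 * i)) = (\<Sum>i<Suc R * k + Suc R. monom (1::bit) (2 * i))"
    by (simp add: algebra_simps)
  also have "\<dots> = (\<Sum>i<Suc R * k. monom (1::bit) (2 * i)) + (\<Sum>r<Suc R. monom 1 (2 * (Suc R * k + r)))"
    by (rule sum_lessThan_add)
  also have "(\<Sum>r<Suc R. monom (1::bit) (2 * (Suc R * k + r))) = monom 1 (2 * Suc R * k) * (\<Sum>r<Suc R. monom 1 (2 * r))"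
    unfolding sum_distrib_left mult_monom by (intro sum.cong) (simp_all add: algebra_simps)
  finally show ?case using Suc by (simp add: algebra_simps)
qed

lemma parity_sum:
  "(\<Sum>j<2 * M. monom (if even j then a else b) j) = (monom a 0 + monom b 1) * (\<Sum>i<M. monom (1::bit) (2 * i))"
proof (induction M)
  case 0 then show ?case by simp
next
  case (Suc M)
  have "(\<Sum>j<2 * Suc M. monom (if even j then a else b) j) =
     (\<Sum>j<2 * M. monom (if even j then a else b) j) + monom a (2 * M) + monom b (Suc (2 * M))"
    by simp
  then show ?case using Suc by (simp add: algebra_simps mult_monom)
qed

lemma Gh_dvd_parity:
  assumes "h \<ge> 1" "\<And>j. j < 2 ^ h * k \<Longrightarrow> c j = (if even j then a else b)"
  shows "Gh h k dvd (\<Sum>j<2 ^ h * k. monom (c j) j)"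
proof -
  obtain R where R: "2 ^ (h - 1) = Suc R" by (metis not0_implies_Suc power_not_zero zero_neq_numeral)
  have hh: "2 ^ h = 2 * Suc R" using assms(1) R by (metis Suc_diff_le diff_Suc_1 power_Suc)
  have "(\<Sum>j<2 ^ h * k. monom (c j) j) = (\<Sum>j<2 * (Suc R * k). monom (if even j then a else b) j)"
    using assms(2) hh by (intro sum.cong) (auto simp: mult.assoc)
  also have "\<dots> = (monom a 0 + monom b 1) * ((\<Sum>i<k. monom 1 (2 * Suc R * i)) * (\<Sum>r<Suc R. monom 1 (2 * r)))"
    by (simp only: parity_sum even_sum_split)
  also have "(\<Sum>i<k. monom 1 (2 * Suc R * i)) = Gh h k" unfolding Gh_def hh ..
  finally show ?thesis by simp
qed

lemma coeff_Gh: "coeff (Gh h k) n = (if 2 ^ h dvd n \<and> n < 2 ^ h * k then 1 else 0)"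
proof -
  have "coeff (Gh h k) n = (\<Sum>i<k. if 2 ^ h * i = n then 1 else 0)"
    unfolding Gh_def by (simp add: coeff_sum coeff_monom)
  also have "\<dots> = (if 2 ^ h dvd n \<and> n < 2 ^ h * k then 1 else 0)"
  proof (cases "2 ^ h dvd n \<and> n < 2 ^ h * k")
    case True
    then obtain i where i: "n = 2 ^ h * i" by blast
    then have "i < k" using True by simp
    then have "(\<Sum>j<k. if 2 ^ h * j = n then 1 else (0::bit)) = (\<Sum>j\<in>{i}. if 2 ^ h * j = n then 1 else 0)"
      using i by (intro sum.mono_neutral_right) auto
    then show ?thesis using True i by simp
  next
    case False
    then have "\<And>j. j < k \<Longrightarrow> 2 ^ h * j \<noteq> n" by auto
    then show ?thesis using False by simp
  qed
  finally show ?thesis .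
qed

lemma not_dvd_c02:
  assumes "k > 1" "Gh 1 k dvd (\<Sum>j<2 * k. monom (c j) j)"
  shows "c 0 = c 2"
proof -
  define F where "F = (\<Sum>j<2 * k. monom (c j) j)"
  have cF: "\<And>i. i < 2 * k \<Longrightarrow> coeff F i = c i"
  proof -
    fix i assume "i < 2 * k"
    have "coeff F i = (\<Sum>j<2 * k. if j = i then c j else 0)" unfolding F_def
      by (simp add: coeff_sum coeff_monom)
    also have "\<dots> = c i" using \<open>i < 2 * k\<close> by (simp add: sum.delta)
    finally show "coeff F i = c i" .
  qed
  obtain g where g: "F = Gh 1 k * g" using assms(2) unfolding F_def by blast
  have degF: "degree F \<le> 2 * k - 1" unfolding F_def
    by (rule degree_sum_le) (auto intro: order.trans[OF degree_monom_le])
  have cG: "coeff (Gh 1 k) (2 * k - 2) = 1" using assms(1) by (simp add: coeff_Gh)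
  then have G0: "Gh 1 k \<noteq> 0" by auto
  have degG: "degree (Gh 1 k) = 2 * k - 2"
  proof (rule antisym)
    show "degree (Gh 1 k) \<le> 2 * k - 2"
      by (rule degree_le) (auto simp: coeff_Gh)
    show "2 * k - 2 \<le> degree (Gh 1 k)" using cG by (intro le_degree) simp
  qed
  have g2: "coeff g 2 = 0"
  proof (cases "g = 0")
    case True then show ?thesis by simp
  next
    case False
    then have "degree F = degree (Gh 1 k) + degree g" using g G0 by (simp add: degree_mult_eq)
    then have "degree g \<le> 1" using degF degG assms(1) by simp
    then show ?thesis by (intro coeff_eq_0) simp
  qed
  have "Gh 1 k * (monom 1 2 - 1) = monom 1 (2 * k) - 1"
  proof -
    define x :: "bit poly" where "x = monom 1 2"
    have "x ^ k - 1 = (x - 1) * (\<Sum>i<k. x ^ i)" by (rule power_diff_1_eq)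
    moreover have "(\<Sum>i<k. x ^ i) = Gh 1 k" unfolding Gh_def x_def
      by (simp add: monom_power mult.commute)
    moreover have "x ^ k = monom 1 (2 * k)" unfolding x_def by (simp add: monom_power)
    ultimately show ?thesis unfolding x_def by (simp add: mult.commute)
  qed
  moreover have "F * (monom 1 2 - 1) = g * (Gh 1 k * (monom 1 2 - 1))" using g by (simp add: ac_simps)
  ultimately have eq: "F * (monom 1 2 - 1) = g * (monom 1 (2 * k) - 1)" by simp
  have e1: "F * (monom 1 2 - 1) = monom 1 2 * F - F" by (simp add: right_diff_distrib mult.commute)
  have "coeff (F * (monom 1 2 - 1)) 2 = coeff (monom 1 2 * F) 2 - coeff F 2"
    unfolding e1 by (rule coeff_diff)
  also have "\<dots> = c 0 - c 2" using cF[of 0] cF[of 2] assms(1) by (simp add: coeff_monom_mult)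
  finally have "coeff (F * (monom 1 2 - 1)) 2 = c 0 - c 2" .
  moreover have "coeff (g * (monom 1 (2 * k) - 1)) 2 = 0"
  proof -
    have e2: "g * (monom 1 (2 * k) - 1) = monom 1 (2 * k) * g - g" by (simp add: right_diff_distrib mult.commute)
    have "coeff (g * (monom 1 (2 * k) - 1)) 2 = coeff (monom 1 (2 * k) * g) 2 - coeff g 2"
      unfolding e2 by (rule coeff_diff)
    also have "\<dots> = 0" using g2 assms(1) by (simp add: coeff_monom_mult)
    finally show ?thesis .
  qed
  ultimately have "c 0 - c 2 = 0" using eq by simp
  then show ?thesis by (simp only: right_minus_eq)
qed


locale slQ = sl +
  fixes Q f :: nat
  assumes Qf: "Q = p ^ f" and QQ: "Q * Q = p ^ m"
begin

lemma Q_odd: "odd Q" using p_odd by (simp add: Qf)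

lemma Q_ge3: "Q \<ge> 3"
proof -
  have "Q \<noteq> 0"
  proof
    assume "Q = 0" then have "p ^ m = 0" using QQ by simp
    then show False using q_ge3 by linarith
  qed
  moreover have "Q \<noteq> 1"
  proof
    assume "Q = 1" then have "p ^ m = 1" using QQ by simp
    then show False using q_ge3 by linarith
  qed
  moreover have "Q \<noteq> 2" using Q_odd by auto
  ultimately show ?thesis by linarith
qed

lemma T_QQ: "T + 1 = Q * Q" using QQ q_ge3 by (simp add: T_def)

lemma T_fac: "T = (Q - 1) * (Q + 1)"
proof -
  obtain R where R: "Q = Suc R" using Q_ge3 by (cases Q) auto
  have "T + 1 = Suc R * Suc R" using T_QQ R by simp
  then show ?thesis using R by (simp add: algebra_simps)
qed

lemma Thalf: "T div 2 = (Q - 1) * ((Q + 1) div 2)"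
proof -
  have "even (Q + 1)" using Q_odd by simp
  then obtain c where c: "Q + 1 = 2 * c" by blast
  then show ?thesis using T_fac by simp
qed

lemma frobQ: "(x + y :: 'a) ^ Q = x ^ Q + y ^ Q" unfolding Qf by (rule frob)

lemma chiQ: "z \<noteq> 0 \<Longrightarrow> (z ^ Q) ^ (T div 2) = z ^ (T div 2)" for z :: 'a
proof -
  assume "z \<noteq> 0"
  have e: "(z ^ Q) ^ (T div 2) = (z ^ (T div 2)) ^ Q" by (simp only: power_mult[symmetric] mult.commute)
  show ?thesis using half_pm[OF \<open>z \<noteq> 0\<close>] Q_odd unfolding e by auto
qed

definition P :: "nat \<Rightarrow> bool" where "P n \<longleftrightarrow> nonzero_nonsquare (\<alpha> ^ n + 1)"

definition A :: "nat \<Rightarrow> nat \<Rightarrow> nat set" where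
  "A N j = {n. n < T \<and> n mod N = j \<and> P n}"

lemma finA: "finite (A N j)" unfolding A_def by auto

lemma alpha_pow_mult_mod: "\<alpha> ^ ((n * e) mod T) = (\<alpha> ^ n) ^ e"
  using alpha_pow_mod[of "n * e"] by (simp add: power_mult)

lemma even_case:
  assumes N0: "N > 0" and NQ: "N dvd Q - 1"
  shows "even (card (A N j))"
proof -
  define L where "L n = (n * Q) mod T" for n
  have NT: "N dvd T" using NQ T_fac by simp
  have T0: "T > 0" using T_ge2 by simp
  have Llt: "L n < T" for n unfolding L_def using T0 by simp
  have LL: "L (L n) = n" if "n < T" for n
  proof -
    have "L (L n) = (n * Q * Q) mod T" unfolding L_def by (simp add: mod_mult_left_eq)
    also have "n * Q * Q = n + T * n"
    proof -
      have "n * Q * Q = n * (Q * Q)" by (simp only: mult.assoc)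
      also have "\<dots> = n * (T + 1)" by (simp only: T_QQ)
      finally show ?thesis by (simp add: algebra_simps)
    qed
    finally show ?thesis using that by simp
  qed
  have Lmod: "L n mod N = n mod N" for n
  proof -
    have "L n mod N = (n * Q) mod N" unfolding L_def using NT by (simp add: mod_mod_cancel)
    also obtain r where r: "Q - 1 = N * r" using NQ by blast
    have "Q = N * r + 1" using r Q_ge3 by linarith
    then have "n * Q = n + N * (n * r)" by (simp add: algebra_simps)
    then have "(n * Q) mod N = n mod N" by simp
    finally show ?thesis .
  qed
  have aL: "\<alpha> ^ L n = (\<alpha> ^ n) ^ Q" for n unfolding L_def by (rule alpha_pow_mult_mod)
  have PL: "P (L n) \<longleftrightarrow> P n" for n
  proof -
    define z where "z = \<alpha> ^ n + 1"
    have "\<alpha> ^ L n + 1 = z ^ Q" unfolding aL z_def frobQ by simp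
    moreover have "nonzero_nonsquare (z ^ Q) \<longleftrightarrow> nonzero_nonsquare z"
    proof (cases "z = 0")
      case True
      moreover have "Q > 0" using Q_ge3 by simp
      ultimately show ?thesis unfolding nonsq_iff by simp
    next
      case False
      then have "z ^ Q \<noteq> 0" by simp
      then show ?thesis unfolding nonsq_iff using chiQ[OF False] False by simp
    qed
    ultimately show ?thesis unfolding P_def z_def by simp
  qed
  have fixP: "\<not> P n" if "L n = n" for n
  proof
    assume Pn: "P n"
    define z where "z = \<alpha> ^ n + 1"
    have "(\<alpha> ^ n) ^ Q = \<alpha> ^ n" using aL[of n] that by simp
    then have zQ: "z ^ Q = z" unfolding z_def frobQ by simp
    have z0: "z \<noteq> 0" using Pn unfolding P_def z_def nonsq_iff by simp
    obtain R where R: "Q = Suc R" using Q_ge3 by (cases Q) auto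
    have "z ^ Q = z * z ^ (Q - 1)" using R by simp
    then have "z ^ (Q - 1) = 1" using zQ z0 by simp
    then have "z ^ (T div 2) = 1" unfolding Thalf by (simp add: power_mult)
    then show False using Pn minus_one_ne_one unfolding P_def z_def nonsq_iff by simp
  qed
  have "even (card (A N j)) \<longleftrightarrow> even (card {n \<in> A N j. L n = n})"
  proof (rule inv_parity[OF finA])
    fix n assume n: "n \<in> A N j"
    then show "L n \<in> A N j" using Llt Lmod PL unfolding A_def by auto
    show "L (L n) = n" using n LL unfolding A_def by auto
  qed
  moreover have "{n \<in> A N j. L n = n} = {}" using fixP unfolding A_def by auto
  ultimately show ?thesis by simp
qed

end

locale slQodd = slQ +
  fixes N :: nat
  assumes N0: "N > 0" and N_even: "even N" and NQ: "N dvd Q + 1"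
begin

definition E :: nat where "E = T - Q"
definition L :: "nat \<Rightarrow> nat" where "L n = (n * E) mod T"

lemma T0: "T > 0" using T_ge2 by simp

lemma ET: "E + Q = T"
proof -
  have "3 * Q \<le> Q * Q" using Q_ge3 by (intro mult_right_mono) auto
  then have "Q \<le> T" using T_QQ by linarith
  then show ?thesis by (simp add: E_def)
qed

lemma EE: "(E * E) mod T = 1"
proof -
  have h1: "T * (T + 1) + 1 = (E + Q) * (E + Q) + (E + Q + 1)" using ET by (simp add: algebra_simps)
  have h2: "E + Q + 1 = Q * Q" using ET T_QQ by simp
  have h3: "(E + Q) * (E + Q) + Q * Q = E * E + T * (2 * Q)" using ET[symmetric] by (simp add: algebra_simps)
  have "E * E + T * (2 * Q) = 1 + T * (T + 1)" using h1 h2 h3 by simp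
  then have "(E * E + T * (2 * Q)) mod T = (1 + T * (T + 1)) mod T" by simp
  then have "(E * E) mod T = 1 mod T" by (simp only: mod_mult_self2)
  then show ?thesis using T_ge2 by simp
qed

lemma Llt: "L n < T" unfolding L_def using T0 by simp

lemma LL: "n < T \<Longrightarrow> L (L n) = n"
proof -
  assume "n < T"
  have "L (L n) = (n * E * E) mod T" unfolding L_def by (simp add: mod_mult_left_eq)
  also have "\<dots> = (n * ((E * E) mod T)) mod T" by (simp only: mod_mult_right_eq mult.assoc)
  also have "\<dots> = n" using EE \<open>n < T\<close> by simp
  finally show ?thesis .
qed

lemma inj_L: "inj_on L {..<T}"
  by (rule inj_onI) (metis LL lessThan_iff)

lemma NT: "N dvd T" unfolding T_fac using NQ by (rule dvd_mult)

lemma Emod: "E mod N = 1 mod N"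
proof -
  obtain r where r: "Q + 1 = N * r" using NQ by blast
  obtain s where s: "T = N * s" using NT by blast
  have "E + N * r = 1 + N * s" using ET r s by simp
  then have "(E + N * r) mod N = (1 + N * s) mod N" by simp
  then show ?thesis by (simp only: mod_mult_self2)
qed

lemma Lmod: "L n mod N = n mod N"
proof -
  have "L n mod N = (n * E) mod N" unfolding L_def using NT by (simp add: mod_mod_cancel)
  also have "\<dots> = (n * (E mod N)) mod N" by (rule mod_mult_right_eq[symmetric])
  also have "\<dots> = (n * (1 mod N)) mod N" by (simp only: Emod)
  also have "\<dots> = n mod N" by (simp only: mod_mult_right_eq mult_1_right)
  finally show ?thesis .
qed

lemma Lpar: "even (L n) \<longleftrightarrow> even n"
  using Lmod[of n] even_mod_even'[OF N_even, of "L n"] even_mod_even'[OF N_even, of n] by simp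

lemma aL: "\<alpha> ^ L n = (\<alpha> ^ n) ^ E" unfolding L_def by (rule alpha_pow_mult_mod)

lemma xEQ: "x \<noteq> 0 \<Longrightarrow> x ^ E * x ^ Q = 1" for x :: 'a
  using powT[of x] by (simp add: power_add[symmetric] ET)

lemma PL_gen:
  assumes z0: "\<alpha> ^ n + 1 \<noteq> 0"
  shows "P (L n) \<longleftrightarrow> (-1) ^ n * (\<alpha> ^ n + 1) ^ (T div 2) = (-1::'a)"
proof -
  define x where "x = \<alpha> ^ n"
  define y where "y = x ^ E"
  define z where "z = x + 1"
  have x0: "x \<noteq> 0" using alpha_nz by (simp add: x_def)
  have yx: "y * x ^ Q = 1" using xEQ[OF x0] by (simp add: y_def)
  then have y0: "y \<noteq> 0" by auto
  have yz: "y + 1 = y * z ^ Q" unfolding z_def frobQ using yx by (simp add: algebra_simps)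
  have zne: "z \<noteq> 0" using z0 by (simp add: z_def x_def)
  have "y = \<alpha> ^ L n" by (simp add: aL y_def x_def)
  then have yh: "y ^ (T div 2) = (-1) ^ n" using pow_half_alpha[of "L n"] Lpar[of n]
    by (cases "even n") (simp_all add: minus_one_power_iff)
  have y10: "y + 1 \<noteq> 0" using yz y0 zne by simp
  have "(y + 1) ^ (T div 2) = y ^ (T div 2) * (z ^ Q) ^ (T div 2)" unfolding yz by (simp add: power_mult_distrib)
  also have "\<dots> = (-1) ^ n * z ^ (T div 2)" using yh chiQ[OF zne] by simp
  finally have "(y + 1) ^ (T div 2) = (-1) ^ n * z ^ (T div 2)" .
  moreover have "P (L n) \<longleftrightarrow> y + 1 \<noteq> 0 \<and> (y + 1) ^ (T div 2) = -1"
    unfolding P_def nonsq_iff by (simp add: aL y_def x_def)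
  ultimately show ?thesis using y10 by (simp add: z_def x_def)
qed

lemma PL_even:
  assumes "even n"
  shows "P (L n) \<longleftrightarrow> P n"
proof (cases "\<alpha> ^ n + 1 = 0")
  case True
  define x where "x = \<alpha> ^ n"
  have x0: "x \<noteq> 0" using alpha_nz by (simp add: x_def)
  have yx: "x ^ E * x ^ Q = 1" using xEQ[OF x0] .
  have "x ^ E + 1 = x ^ E * (x + 1) ^ Q" unfolding frobQ using yx by (simp add: algebra_simps)
  then have "x ^ E + 1 = 0" using True Q_ge3 by (simp add: x_def)
  then have "\<not> P (L n)" unfolding P_def nonsq_iff by (simp add: aL x_def)
  moreover have "\<not> P n" unfolding P_def nonsq_iff using True by simp
  ultimately show ?thesis by simp
next
  case False
  then show ?thesis using PL_gen[OF False] assms unfolding P_def nonsq_iff by simp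
qed

lemma PL_odd:
  assumes "odd n" "\<alpha> ^ n + 1 \<noteq> 0"
  shows "P (L n) \<longleftrightarrow> \<not> P n"
proof -
  have "P (L n) \<longleftrightarrow> (\<alpha> ^ n + 1) ^ (T div 2) = 1"
    using PL_gen[OF assms(2)] assms(1) by (simp add: minus_equation_iff)
  also have "\<dots> \<longleftrightarrow> \<not> P n"
    unfolding P_def nonsq_iff using half_pm[OF assms(2)] minus_one_ne_one assms(2) by auto
  finally show ?thesis .
qed

lemma Qm1_pos: "Q - 1 > 0" using Q_ge3 by simp

lemma xQ1: "(\<alpha> ^ ((Q - 1) * t)) ^ (Q + 1) = 1"
proof -
  have "(\<alpha> ^ ((Q - 1) * t)) ^ (Q + 1) = (\<alpha> ^ T) ^ t" unfolding T_fac
    by (simp only: power_mult[symmetric] ac_simps)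
  then show ?thesis by (simp add: alpha_T)
qed

lemma fix_iff:
  assumes "n < T"
  shows "L n = n \<longleftrightarrow> (Q - 1) dvd n"
proof
  assume Ln: "L n = n"
  define x where "x = \<alpha> ^ n"
  have x0: "x \<noteq> 0" using alpha_nz by (simp add: x_def)
  have "x ^ E = x" using aL[of n] Ln by (simp add: x_def)
  then have "x * x ^ Q = 1" using xEQ[OF x0] by simp
  moreover have "\<alpha> ^ (n * (Q + 1)) = x * x ^ Q"
  proof -
    have "\<alpha> ^ (n * (Q + 1)) = x ^ (Q + 1)" unfolding x_def by (rule power_mult)
    then show ?thesis by simp
  qed
  ultimately have "\<alpha> ^ (n * (Q + 1)) = \<alpha> ^ 0" by simp
  then have "(n * (Q + 1)) mod T = 0 mod T" by (simp only: alpha_pow_eq)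
  then have "(n * (Q + 1)) mod T = 0" by simp
  then have "(Q - 1) * (Q + 1) dvd n * (Q + 1)" using T_fac by (simp add: dvd_eq_mod_eq_0)
  then show "(Q - 1) dvd n" by (subst (asm) dvd_times_right_cancel_iff) simp_all
next
  assume "(Q - 1) dvd n"
  then obtain t where t: "n = (Q - 1) * t" by blast
  define x where "x = \<alpha> ^ n"
  have x0: "x \<noteq> 0" using alpha_nz by (simp add: x_def)
  have "x ^ (Q + 1) = 1" using xQ1[of t] by (simp add: x_def t)
  then have "x * x ^ Q = 1" by (simp add: mult.commute)
  then have "x ^ E * x ^ Q = x * x ^ Q" using xEQ[OF x0] by simp
  then have "x ^ E = x" using x0 by simp
  then have "\<alpha> ^ L n = \<alpha> ^ n" using aL[of n] by (simp add: x_def)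
  then have "L n mod T = n mod T" using alpha_pow_eq by blast
  then show "L n = n" using Llt[of n] assms by simp
qed

lemma P_fix:
  assumes "t < Q + 1"
  shows "P ((Q - 1) * t) \<longleftrightarrow> t \<noteq> (Q + 1) div 2 \<and> odd t"
proof -
  define n where "n = (Q - 1) * t"
  define x where "x = \<alpha> ^ n"
  define z where "z = x + 1"
  have x0: "x \<noteq> 0" using alpha_nz by (simp add: x_def)
  have xQ: "x * x ^ Q = 1" using xQ1[of t] by (simp add: x_def n_def mult.commute)
  have nT: "n < T" unfolding n_def T_fac by (rule mult_strict_left_mono[OF assms Qm1_pos])
  have hT: "T div 2 < T" using T_ge2 by simp
  have z0iff: "z = 0 \<longleftrightarrow> t = (Q + 1) div 2"
  proof -
    have "z = 0 \<longleftrightarrow> \<alpha> ^ n = \<alpha> ^ (T div 2)" unfolding z_def x_def alpha_half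
      by (simp add: eq_neg_iff_add_eq_0)
    also have "\<dots> \<longleftrightarrow> n = T div 2" using alpha_pow_eq nT hT by simp
    also have "\<dots> \<longleftrightarrow> t = (Q + 1) div 2" unfolding n_def Thalf using Qm1_pos by simp
    finally show ?thesis .
  qed
  show ?thesis
  proof (cases "z = 0")
    case True
    then show ?thesis using z0iff unfolding P_def nonsq_iff n_def[symmetric] x_def[symmetric] z_def[symmetric] by simp
  next
    case False
    have zQ: "z ^ Q = x ^ Q + 1" unfolding z_def frobQ by simp
    then have "z ^ Q * x = z" using xQ by (simp add: z_def algebra_simps)
    moreover obtain R where R: "Q = Suc R" using Q_ge3 by (cases Q) auto
    ultimately have "z * (z ^ (Q - 1) * x) = z * 1" by (simp add: algebra_simps)
    then have zx: "z ^ (Q - 1) * x = 1" using False by simp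
    have "(z ^ (Q - 1) * x) ^ ((Q + 1) div 2) = 1" using zx by simp
    then have e1: "z ^ (T div 2) * x ^ ((Q + 1) div 2) = 1"
      unfolding Thalf by (simp add: power_mult power_mult_distrib)
    have "x ^ ((Q + 1) div 2) = (\<alpha> ^ (T div 2)) ^ t" unfolding x_def n_def Thalf
      by (simp only: power_mult[symmetric] ac_simps)
    then have e2: "x ^ ((Q + 1) div 2) = (-1) ^ t" by (simp add: alpha_half)
    have "z ^ (T div 2) = (-1) ^ t"
    proof -
      have "z ^ (T div 2) * (-1) ^ t * (-1) ^ t = (-1) ^ t" using e1 e2 by simp
      then show ?thesis by (simp add: mult.assoc power_add[symmetric] flip: power_mult_distrib)
    qed
    then have "P n \<longleftrightarrow> (-1::'a) ^ t = -1" unfolding P_def nonsq_iff using False by (simp add: z_def x_def)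
    also have "\<dots> \<longleftrightarrow> odd t" using minus_one_ne_one by (cases "even t") auto
    finally show ?thesis using False z0iff by (simp add: n_def)
  qed
qed

lemma modN_iff:
  assumes "j < N"
  shows "((Q - 1) * t) mod N = j \<longleftrightarrow> N dvd 2 * t + j"
proof -
  define a where "a = (Q - 1) * t"
  have a2: "a + 2 * t = (Q + 1) * t" unfolding a_def using Q_ge3 by (simp add: algebra_simps)
  have "N dvd (Q + 1) * t" using NQ by (rule dvd_mult2)
  then have a0: "(a + 2 * t) mod N = 0" unfolding a2 by (simp only: dvd_eq_mod_eq_0)
  show ?thesis
  proof
    assume "((Q - 1) * t) mod N = j"
    then have "a mod N = j" by (simp add: a_def)
    then have "(2 * t + j) mod N = (2 * t + a mod N) mod N" by simp
    also have "\<dots> = (a mod N + 2 * t) mod N" by (simp only: add.commute)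
    also have "\<dots> = (a + 2 * t) mod N" by (rule mod_add_left_eq)
    finally show "N dvd 2 * t + j" using a0 by (simp add: dvd_eq_mod_eq_0)
  next
    assume d: "N dvd 2 * t + j"
    then obtain r where r: "2 * t + j = N * r" by blast
    have "a mod N = (a + N * r) mod N" by simp
    also have "a + N * r = (a + 2 * t) + j" using r by simp
    also have "((a + 2 * t) + j) mod N = ((a + 2 * t) mod N + j) mod N" by (simp add: mod_add_left_eq)
    also have "\<dots> = j" using a0 assms by simp
    finally show "((Q - 1) * t) mod N = j" by (simp add: a_def)
  qed
qed

lemma even_j:
  assumes "j < N" "even j"
  shows "even (card (A N j)) \<longleftrightarrow> even (card (Gset (Q + 1) N j))"
proof -
  have nev: "even n" if "n mod N = j" for n
    using that assms(2) even_mod_even'[OF N_even, of n] by simp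
  have "even (card (A N j)) \<longleftrightarrow> even (card {n \<in> A N j. L n = n})"
  proof (rule inv_parity[OF finA])
    fix n assume n: "n \<in> A N j"
    then show "L n \<in> A N j" using Llt Lmod PL_even nev unfolding A_def by auto
    show "L (L n) = n" using n LL unfolding A_def by auto
  qed
  moreover have "{n \<in> A N j. L n = n} = (\<lambda>t. (Q - 1) * t) ` Gset (Q + 1) N j"
  proof
    show "{n \<in> A N j. L n = n} \<subseteq> (\<lambda>t. (Q - 1) * t) ` Gset (Q + 1) N j"
    proof
      fix n assume n: "n \<in> {n \<in> A N j. L n = n}"
      then have n1: "n < T" "n mod N = j" "P n" "L n = n" unfolding A_def by auto
      then obtain t where t: "n = (Q - 1) * t" using fix_iff by blast
      have "(Q - 1) * t < (Q - 1) * (Q + 1)" using n1(1) t unfolding T_fac by simp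
      then have "t < Q + 1" by (simp only: mult_less_cancel1)
      moreover have "N dvd 2 * t + j" using modN_iff[OF assms(1)] n1(2) t by simp
      moreover have "t \<noteq> (Q + 1) div 2 \<and> odd t" using P_fix[OF \<open>t < Q + 1\<close>] n1(3) t by simp
      ultimately show "n \<in> (\<lambda>t. (Q - 1) * t) ` Gset (Q + 1) N j" using t unfolding Gset_def by auto
    qed
    show "(\<lambda>t. (Q - 1) * t) ` Gset (Q + 1) N j \<subseteq> {n \<in> A N j. L n = n}"
    proof
      fix n assume "n \<in> (\<lambda>t. (Q - 1) * t) ` Gset (Q + 1) N j"
      then obtain t where t: "n = (Q - 1) * t" "t < Q + 1" "N dvd 2 * t + j" "t \<noteq> (Q + 1) div 2" "odd t"
        unfolding Gset_def by auto
      have nT: "n < T" unfolding t(1) T_fac by (rule mult_strict_left_mono[OF t(2) Qm1_pos])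
      moreover have "n mod N = j" using modN_iff[OF assms(1)] t by simp
      moreover have "P n" using P_fix[OF t(2)] t by simp
      moreover have "L n = n" using fix_iff[OF nT] t by simp
      ultimately show "n \<in> {n \<in> A N j. L n = n}" unfolding A_def by simp
    qed
  qed
  moreover have "card ((\<lambda>t. (Q - 1) * t) ` Gset (Q + 1) N j) = card (Gset (Q + 1) N j)"
    using Qm1_pos by (intro card_image inj_onI) simp
  ultimately show ?thesis by simp
qed

definition C :: "nat \<Rightarrow> nat set" where "C j = {n. n < T \<and> n mod N = j}"

lemma card_C_le:
  assumes "j < N" "j' < N"
  shows "card (C j) \<le> card (C j')"
proof -
  define c where "c = N + j' - j"
  have "inj_on (\<lambda>n. (n + c) mod T) (C j)" by (rule inj_shift_on) (auto simp: C_def)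
  moreover have "(\<lambda>n. (n + c) mod T) ` C j \<subseteq> C j'"
  proof
    fix x assume "x \<in> (\<lambda>n. (n + c) mod T) ` C j"
    then obtain n where n: "n < T" "n mod N = j" "x = (n + c) mod T" unfolding C_def by auto
    have "x mod N = (n + c) mod N" using n(3) NT by (simp add: mod_mod_cancel)
    also have "\<dots> = (n mod N + c) mod N" by (simp add: mod_add_left_eq)
    also have "n mod N + c = j' + N" using n(2) assms by (simp add: c_def)
    also have "(j' + N) mod N = j'" using assms by simp
    finally show "x \<in> C j'" using n(3) T0 by (simp add: C_def)
  qed
  ultimately show ?thesis by (rule card_inj_on_le) (simp add: C_def)
qed

lemma card_C_eq: "j < N \<Longrightarrow> j' < N \<Longrightarrow> card (C j) = card (C j')"
  using card_C_le by (metis le_antisym)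

lemma NThalf: "N dvd T div 2"
proof -
  have "even (Q - 1)" using Q_odd Q_ge3 by simp
  then obtain c where c: "Q - 1 = 2 * c" by blast
  then have e: "T div 2 = c * (Q + 1)" using T_fac by simp
  show ?thesis unfolding e using NQ by (rule dvd_mult)
qed

lemma odd_j:
  assumes "j < N" "odd j"
  shows "card (A N j) = card (A N 1)"
proof -
  have gen: "card (A N i) * 2 = card (C i)" if "i < N" "odd i" for i
  proof -
    define B where "B = {n. n < T \<and> n mod N = i \<and> \<not> P n}"
    have propi: "odd n \<and> \<alpha> ^ n + 1 \<noteq> 0" if "n < T" "n mod N = i" for n
    proof
      show "odd n" using that \<open>odd i\<close> even_mod_even'[OF N_even, of n] by simp
      show "\<alpha> ^ n + 1 \<noteq> 0"
      proof
        assume "\<alpha> ^ n + 1 = 0"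
        then have "\<alpha> ^ n = \<alpha> ^ (T div 2)" unfolding alpha_half by (simp add: eq_neg_iff_add_eq_0)
        then have "n mod T = (T div 2) mod T" by (simp only: alpha_pow_eq)
        then have "n = T div 2" using that(1) T_ge2 by simp
        then have "n mod N = 0" using NThalf by simp
        then show False using that(2) \<open>odd i\<close> by simp
      qed
    qed
    have fB: "finite B" unfolding B_def by auto
    have "card (A N i) = card B"
    proof (rule card_eq_inj2[OF finA fB])
      show "inj_on L (A N i)" using inj_L by (rule inj_on_subset) (auto simp: A_def)
      show "inj_on L B" using inj_L by (rule inj_on_subset) (auto simp: B_def)
      show "L ` A N i \<subseteq> B"
      proof
        fix x assume "x \<in> L ` A N i"
        then obtain n where n: "n < T" "n mod N = i" "P n" "x = L n" unfolding A_def by auto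
        have "\<not> P (L n)" using PL_odd propi[OF n(1,2)] n(3) by simp
        then show "x \<in> B" using n Llt Lmod by (simp add: B_def)
      qed
      show "L ` B \<subseteq> A N i"
      proof
        fix x assume "x \<in> L ` B"
        then obtain n where n: "n < T" "n mod N = i" "\<not> P n" "x = L n" unfolding B_def by auto
        have "P (L n)" using PL_odd propi[OF n(1,2)] n(3) by simp
        then show "x \<in> A N i" using n Llt Lmod by (simp add: A_def)
      qed
    qed
    moreover have "C i = A N i \<union> B" unfolding C_def A_def B_def by auto
    moreover have "A N i \<inter> B = {}" unfolding A_def B_def by auto
    ultimately show ?thesis using finA fB by (simp add: card_Un_disjoint)
  qed
  have "1 < N" using N0 N_even by (cases "N = 1") auto
  then have "card (A N j) * 2 = card (A N 1) * 2" using gen[OF assms] gen[of 1] card_C_eq[OF assms(1), of 1] by simp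
  then show ?thesis by simp
qed

end


context slQ begin

lemma slce_P: "slce \<alpha> n = (if P n then 1 else 0)" unfolding slce_def P_def ..

lemma S_eq: "slce_poly \<alpha> = (\<Sum>n<T. monom (slce \<alpha> n) n)" unfolding slce_poly_def T_def card_eq ..

lemma c_card: "(\<Sum>n\<in>{n. n < T \<and> n mod N = j}. slce \<alpha> n) = of_nat (card (A N j))"
proof -
  have "(\<Sum>n\<in>{n. n < T \<and> n mod N = j}. slce \<alpha> n) = of_nat (card {n \<in> {n. n < T \<and> n mod N = j}. P n})"
    unfolding slce_P by (rule sum_if_bit) simp
  also have "{n \<in> {n. n < T \<and> n mod N = j}. P n} = A N j" unfolding A_def by auto
  finally show ?thesis .
qed

lemma red_iff:
  assumes "N = 2 ^ h * k" "N > 0"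
  shows "Gh h k dvd slce_poly \<alpha> \<longleftrightarrow> Gh h k dvd (\<Sum>j<N. monom (of_nat (card (A N j))) j)"
proof -
  define S where "S = (\<Sum>n<T. monom (slce \<alpha> n) n)"
  define R where "R = (\<Sum>j<N. monom (of_nat (card (A N j)) :: bit) j)"
  have "(monom 1 N - 1) dvd S - R"
    using reduce_mod[OF assms(2), where s = "slce \<alpha>" and T = T] unfolding S_def R_def by (simp only: c_card)
  moreover have "Gh h k dvd monom 1 N - 1" using Gh_dvd assms(1) by simp
  ultimately have d: "Gh h k dvd S - R" by (metis dvd_trans)
  have "S = (S - R) + R" by simp
  then have "Gh h k dvd S \<longleftrightarrow> Gh h k dvd R" using d by (metis dvd_add_right_iff)
  then show ?thesis unfolding S_def R_def S_eq .
qed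

lemma main_even:
  assumes "k > 0" "2 ^ h * k dvd Q - 1"
  shows "Gh h k dvd slce_poly \<alpha>"
proof -
  define N where "N = 2 ^ h * k"
  have N0: "N > 0" using assms(1) by (simp add: N_def)
  have "\<And>j. even (card (A N j))" using even_case[OF N0] assms(2) by (simp add: N_def)
  then have "(\<Sum>j<N. monom (of_nat (card (A N j)) :: bit) j) = 0" by (simp add: of_nat_bit)
  then show ?thesis using red_iff[OF N_def N0] by simp
qed

end

context slQodd begin

lemma main_odd_good:
  assumes "N = 2 ^ h * k" "h \<ge> 1" "4 dvd Q + 1"
  shows "Gh h k dvd slce_poly \<alpha>"
proof -
  define c where "c j = (of_nat (card (A N j)) :: bit)" for j
  have cj: "c j = (if even j then 0 else c 1)" if "j < 2 ^ h * k" for j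
  proof (cases "even j")
    case True
    have "even (card (Gset (Q + 1) N j))" using Gset_even[OF assms(3) NQ] by simp
    then have "even (card (A N j))" using even_j[of j] True that assms(1) by simp
    then show ?thesis using True by (simp add: c_def of_nat_bit)
  next
    case False
    then show ?thesis using odd_j[of j] that assms(1) by (simp add: c_def)
  qed
  have "Gh h k dvd (\<Sum>j<2 ^ h * k. monom (c j) j)" by (rule Gh_dvd_parity[OF assms(2) cj])
  then show ?thesis using red_iff[OF assms(1) N0] assms(1) by (simp add: c_def)
qed

lemma main_odd_bad:
  assumes "N = 2 * k" "odd k" "k > 1" "(Q + 1) mod 4 = 2"
  shows "\<not> Gh 1 k dvd slce_poly \<alpha>"
proof
  assume d: "Gh 1 k dvd slce_poly \<alpha>"
  define c where "c j = (of_nat (card (A N j)) :: bit)" for j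
  have e: "N = 2 ^ 1 * k" using assms(1) by simp
  have "Gh 1 k dvd (\<Sum>j<N. monom (c j) j)" using d red_iff[OF e N0] unfolding c_def by blast
  then have "Gh 1 k dvd (\<Sum>j<2 * k. monom (c j) j)" using assms(1) by simp
  then have c02: "c 0 = c 2" using not_dvd_c02 assms(3) by blast
  have "even (card (Gset (Q + 1) (2 * k) 0)) \<longleftrightarrow> odd (card (Gset (Q + 1) (2 * k) 2))"
    using Gset_02[OF assms(4) _ assms(2,3)] NQ assms(1) by simp
  moreover have "even (card (A N 0)) \<longleftrightarrow> even (card (Gset (Q + 1) N 0))" using even_j[of 0] N0 by simp
  moreover have "even (card (A N 2)) \<longleftrightarrow> even (card (Gset (Q + 1) N 2))" using even_j[of 2] assms(1,3) by simp
  ultimately have "even (card (A N 0)) \<longleftrightarrow> odd (card (A N 2))" using assms(1) by simp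
  then show False using c02 by (simp add: c_def of_nat_bit split: if_splits)
qed

end


theorem mainTheorem10:
  fixes p m k h :: nat and \<alpha> :: "'a::{field,finite}"
  assumes "prime p" and "odd p" and "m \<ge> 1"
    and "card (UNIV :: 'a set) = p ^ m"
    and "primitive_element \<alpha>"
    and "odd k" and "k > 1" and "k dvd (card (UNIV :: 'a set) - 1)"
    and "h \<ge> 1"
    and "\<exists>v::nat. v > 0 \<and> 2 ^ h * k dvd p ^ v + 1"
  shows "\<exists>w'::nat. w' > 0 \<and>
           m = 2 * (LEAST v'. v' > 0 \<and> k dvd p ^ v' + 1) * w' \<and>
           (p mod 4 = 1 \<longrightarrow>
              ((geom_poly k) ^ (2 ^ h) dvd slce_poly \<alpha> \<longleftrightarrow> even w')) \<and>
           (p mod 4 = 3 \<longrightarrow>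
              ((geom_poly k) ^ (2 ^ h) dvd slce_poly \<alpha> \<longleftrightarrow>
                 even w' \<or> odd ((LEAST v'. v' > 0 \<and> k dvd p ^ v' + 1) * w')))"
proof -
  note A = assms
  define u where "u = (LEAST v'. v' > 0 \<and> k dvd p ^ v' + 1)"
  obtain v where v: "v > 0" "2 ^ h * k dvd p ^ v + 1" using A(10) by blast
  have kq: "k dvd p ^ m - 1" using A(8) A(4) by simp
  obtain w where w: "w > 0" "m = 2 * u * w" "even w \<longrightarrow> 2 ^ h * k dvd p ^ (u * w) - 1"
      "odd w \<longrightarrow> 2 ^ h * k dvd p ^ (u * w) + 1"
    using nt_main[OF A(2) A(3) A(6) A(7) kq A(9) v(1) v(2)] unfolding u_def by blast
  define Q where "Q = p ^ (u * w)"
  have e: "2 * u * w = u * w + u * w" by simp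
  have QQ: "Q * Q = p ^ m" unfolding Q_def w(2) e by (simp only: power_add)
  interpret slQ \<alpha> p m Q "u * w"
    by unfold_locales (use A QQ in \<open>simp_all add: Q_def\<close>)
  have gp: "geom_poly k ^ (2 ^ h) = Gh h k" unfolding geom_pow Gh_def ..
  have p4: "p mod 4 = 1 \<or> p mod 4 = 3"
    using A(2) by presburger
  have Qm: "Q mod 4 = 1 \<longleftrightarrow> p mod 4 = 1 \<or> even (u * w)" unfolding Q_def by (rule Q_mod4[OF p4])
  have key: "Gh h k dvd slce_poly \<alpha> \<longleftrightarrow> even w \<or> Q mod 4 \<noteq> 1"
  proof (cases "even w")
    case True
    then have "Gh h k dvd slce_poly \<alpha>" using main_even[of k h] w(3) A(7) by (simp add: Q_def)
    then show ?thesis using True by simp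
  next
    case False
    have NQ: "2 ^ h * k dvd Q + 1" using w(4) False by (simp add: Q_def)
    interpret slQodd \<alpha> p m Q "u * w" "2 ^ h * k"
      by unfold_locales (use A NQ in auto)
    show ?thesis
    proof (cases "Q mod 4 = 1")
      case True
      then have Q4: "(Q + 1) mod 4 = 2" by (simp add: mod_Suc)
      have h1: "h = 1"
      proof (rule ccontr)
        assume "h \<noteq> 1"
        then have "h \<ge> 2" using A(9) by simp
        then have "(4::nat) dvd 2 ^ h" using le_imp_power_dvd[of 2 h 2] by simp
        then have "4 dvd Q + 1" using NQ by (meson dvd_mult_left dvd_trans)
        then show False using Q4 by simp
      qed
      have "\<not> Gh 1 k dvd slce_poly \<alpha>" by (rule main_odd_bad) (use h1 A Q4 in simp_all)
      then show ?thesis using True False h1 by simp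
    next
      case True': False
      have "odd Q" using Q_odd .
      then have "(Q + 1) mod 4 = 0" using True' by presburger
      then have "4 dvd Q + 1" by (simp add: dvd_eq_mod_eq_0)
      then have "Gh h k dvd slce_poly \<alpha>" by (intro main_odd_good[of h k]) (use A in simp_all)
      then show ?thesis using True' by simp
    qed
  qed
  show ?thesis
    unfolding u_def[symmetric] gp
    using w(1,2) key Qm p4 by (intro exI[of _ w]) auto
qed


end
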